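(* Let $\delta_1=1/32$, $\delta_2=1/4$, and $$U=\{(x,y,0): 1-\delta_1<x\leq 1,\ -\delta_2<y<\delta_2\},\quad V=\{(x,y,0): -1\leq x<-1+\delta_1,\ -\delta_2<y<\delta_2\},$$ $$W=\{(x,y,z): -\delta_2<x<\delta_2,\ 1-\delta_1<y\leq 1,\ 0\leq z<\delta_2\}.$$ Let $A=(0,-1,0)$, let $S^1=\{(x,y,0):x^2+y^2=1\}$ and $S^2_{\geq 0}=\{(x,y,z):x^2+y^2+z^2=1,\ z\geq 0\}$. Then for any $B\in U\cap S^1$, $C\in V\cap S^1$, $D\in W\cap S^2_{\geq 0}$, $$AB+BC+CA+DA+DB+DC\leq 4+4\sqrt{2},$$ where $PQ$ denotes the Euclidean distance between $P$ and $Q$. *)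

theory Defs
  imports "HOL-Analysis.Analysis"
begin

definition \<delta>1 :: real where "\<delta>1 = 1/32"
definition \<delta>2 :: real where "\<delta>2 = 1/4"

definition pt :: "real \<Rightarrow> real \<Rightarrow> real \<Rightarrow> real^3" where
  "pt x y z = vector [x, y, z]"

definition U_set :: "(real^3) set" where
  "U_set = {pt x y 0 | x y. 1 - \<delta>1 < x \<and> x \<le> 1 \<and> -\<delta>2 < y \<and> y < \<delta>2}"

definition V_set :: "(real^3) set" where
  "V_set = {pt x y 0 | x y. -1 \<le> x \<and> x < -1 + \<delta>1 \<and> -\<delta>2 < y \<and> y < \<delta>2}"

definition W_set :: "(real^3) set" where
  "W_set = {pt x y z | x y z. -\<delta>2 < x \<and> x < \<delta>2 \<and> 1 - \<delta>1 < y \<and> y \<le> 1 \<and> 0 \<le> z \<and> z < \<delta>2}"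

definition S1 :: "(real^3) set" where
  "S1 = {pt x y 0 | x y. x^2 + y^2 = 1}"

definition S2_upper :: "(real^3) set" where
  "S2_upper = {pt x y z | x y z. x^2 + y^2 + z^2 = 1 \<and> z \<ge> 0}"

definition A_pt :: "real^3" where "A_pt = pt 0 (-1) 0"

end

theory Submission imports Defs begin

lemma dist_pt: "dist (pt a b c) (pt x y z) = sqrt((a-x)^2+(b-y)^2+(c-z)^2)"
  unfolding dist_norm norm_eq_sqrt_inner pt_def
  by (simp add: inner_vec_def sum_3 vector_3 power2_eq_square)

lemma pt_nth: "pt x y z $ 1 = x" "pt x y z $ 2 = y" "pt x y z $ 3 = z"
  unfolding pt_def by (simp_all add: vector_3)

lemma pt_eta: "P = pt (P$1) (P$2) (P$3)"
  unfolding pt_def by (simp add: vec_eq_iff vector_3 forall_3)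

lemma tangent: assumes "x \<ge> 0" "a > 0" shows "sqrt x \<le> (x + a^2) / (2 * a)"
proof -
  have "0 \<le> (sqrt x - a)^2" by simp
  also have "\<dots> = x - 2 * a * sqrt x + a^2" using assms by (simp add: power2_eq_square algebra_simps)
  finally show ?thesis using assms by (simp add: field_simps)
qed

lemma key:
  fixes b1 b2 c1 c2 d1 d2 d3 r :: real
  assumes b: "b1^2+b2^2=1" and c: "c1^2+c2^2=1" and d: "d1^2+d2^2+d3^2=1"
    and b1: "31/32<b1" and c1: "c1 < -31/32" and b2: "\<bar>b2\<bar> < 1/4" and c2: "\<bar>c2\<bar> < 1/4"
    and d1: "\<bar>d1\<bar> < 1/4" and d2: "31/32 < d2" "d2 \<le> 1" and r: "r^2 = 2" "r > 0"
  shows "(b1 + c1)^2/2 + (b2+c2)^2/2 + (1-d2) + r * d1 * (b1+c1) - r * (1-d2) * (b2+c2) \<ge> 0"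
proof -
  define u where "u = b1+c1"
  define v where "v = b2+c2"
  define e where "e = 1-d2"
  have h1: "u * (b1-c1) = v * (c2-b2)" unfolding u_def v_def using b c
    by (simp add: algebra_simps power2_eq_square)
  have "\<bar>u\<bar> * (b1-c1) = \<bar>v\<bar> * \<bar>c2-b2\<bar>" using h1 b1 c1
    
  proof -
    have "\<bar>u * (b1-c1)\<bar> = \<bar>v * (c2-b2)\<bar>" using h1 by simp
    moreover have "b1 - c1 > 0" using b1 c1 by simp
    ultimately show ?thesis by (simp add: abs_mult)
  qed
  moreover have "\<bar>v\<bar> * \<bar>c2-b2\<bar> \<le> \<bar>v\<bar> * (1/2)" using b2 c2 by (intro mult_left_mono) (auto simp: abs_if split: if_splits)
  moreover have "\<bar>u\<bar> * (b1-c1) \<ge> \<bar>u\<bar> * (62/32)" using b1 c1 by (intro mult_left_mono) auto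
  ultimately have that_h: "\<bar>u\<bar> \<le> \<bar>v\<bar>/2" by linarith
  have h2: "u^2 \<le> v^2/4"
  proof -
    have "\<bar>u\<bar>^2 \<le> (\<bar>v\<bar>/2)^2" using that_h by (intro power_mono) auto
    thus ?thesis by (simp add: power_divide)
  qed
  have h3: "d1^2 \<le> 2 * e" unfolding e_def
  proof -
    have "d1^2 \<le> 1 - d2^2" using d by (smt (verit) zero_le_power2)
    also have "\<dots> = (1-d2) * (1+d2)" by (simp add: algebra_simps power2_eq_square)
    also have "\<dots> \<le> (1-d2) * 2" using d2 by (intro mult_left_mono) auto
    finally show "d1^2 \<le> 2 * (1-d2)" by simp
  qed
  have e: "0 \<le> e" "e \<le> 1/32" unfolding e_def using d2 by auto
  have h4: "v^2/4 - r * e * v \<ge> -2 * e^2"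
  proof -
    have "0 \<le> (v/2 - r * e)^2" by simp
    also have "\<dots> = v^2/4 - r * e * v + r^2 * e^2" by (simp add: power2_eq_square algebra_simps)
    finally show ?thesis using r by simp
  qed
  have "e * (e * 32) \<le> e * 1" using e by (intro mult_left_mono) auto
  hence h5: "e - 2 * e^2 \<ge> (15/16) * e" by (simp add: power2_eq_square)
  have h6: "3/2 * u^2 + r * d1 * u + (15/32) * d1^2 \<ge> 0"
  proof -
    have "0 \<le> 3/2 * (u + r * d1/3)^2 + d1^2 * (15/32 - 1/3)" by simp
    also have "\<dots> = 3/2 * u^2 + r * d1 * u + r^2 * d1^2/6 + d1^2 * (15/32 - 1/3)"
      by (simp add: power2_eq_square algebra_simps)
    also have "\<dots> = 3/2 * u^2 + r * d1 * u + (15/32) * d1^2" using r by (simp add: algebra_simps)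
    finally show ?thesis .
  qed
  have "u^2/2 + v^2/2 + e + r * d1 * u - r * e * v \<ge> 0"
    using h2 h3 h4 h5 h6 by linarith
  thus ?thesis unfolding u_def v_def e_def .
qed

lemma final_arith: fixes b1 b2 c1 c2 d1 d2 r :: real
 assumes k: "(b1 + c1)^2/2 + (b2+c2)^2/2 + (1-d2) + r * d1 * (b1+c1) - r * (1-d2) * (b2+c2) \<ge> 0"
 and s3: "(b1 + c1)^2/2 + (b2+c2)^2/2 = 1 + b1 * c1+b2 * c2"
 shows "r * (16 - 2 * (-b2-c2 + d1 * (b1+c1) + d2 * (b2+c2)))/4 + (12 - 2 * (b1 * c1+b2 * c2 - d2))/4 \<le> 4 + 4 * r"
proof -
  have k2: "0 \<le> 2 + b1 * c1+b2 * c2 - d2 + r * (-b2-c2 + d1 * (b1+c1) + d2 * (b2+c2))"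
    using k unfolding s3 by (simp add: algebra_simps)
  define K where "K = 2 + b1 * c1+b2 * c2 - d2 + r * (-b2-c2 + d1 * (b1+c1) + d2 * (b2+c2))"
  have eq: "r * (16 - 2 * (-b2-c2 + d1 * (b1+c1) + d2 * (b2+c2)))/4 + (12 - 2 * (b1 * c1+b2 * c2 - d2))/4
     = 4 + 4 * r - K/2"
    unfolding K_def by (simp add: field_simps)
  show ?thesis unfolding eq using k2 K_def by simp
qed

theorem theorem2:
  fixes B C D :: "real^3"
  assumes "B \<in> U_set \<inter> S1" and "C \<in> V_set \<inter> S1" and "D \<in> W_set \<inter> S2_upper"
  shows "dist A_pt B + dist B C + dist C A_pt + dist D A_pt + dist D B + dist D C
           \<le> 4 + 4 * sqrt 2"
proof -
  obtain b1 b2 where B: "B = pt b1 b2 0" "1 - \<delta>1 < b1" "b1 \<le> 1" "-\<delta>2 < b2" "b2 < \<delta>2"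
    using assms(1) unfolding U_set_def by blast
  obtain b1' b2' where B': "B = pt b1' b2' 0" "b1'^2+b2'^2=1"
    using assms(1) unfolding S1_def by blast
  have "b1' = b1" "b2' = b2" using B B' pt_nth by metis+
  hence bu: "b1^2+b2^2=1" using B' by simp
  obtain c1 c2 where C: "C = pt c1 c2 0" "-1 \<le> c1" "c1 < -1 + \<delta>1" "-\<delta>2 < c2" "c2 < \<delta>2"
    using assms(2) unfolding V_set_def by blast
  obtain c1' c2' where C': "C = pt c1' c2' 0" "c1'^2+c2'^2=1"
    using assms(2) unfolding S1_def by blast
  have "c1' = c1" "c2' = c2" using C C' pt_nth by metis+
  hence cu: "c1^2+c2^2=1" using C' by simp
  obtain d1 d2 d3 where D: "D = pt d1 d2 d3" "-\<delta>2 < d1" "d1 < \<delta>2" "1 - \<delta>1 < d2" "d2 \<le> 1"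
      "0 \<le> d3" "d3 < \<delta>2"
    using assms(3) unfolding W_set_def by blast
  obtain d1' d2' d3' where D': "D = pt d1' d2' d3'" "d1'^2+d2'^2+d3'^2=1"
    using assms(3) unfolding S2_upper_def by blast
  have "d1' = d1" "d2' = d2" "d3' = d3" using D D' pt_nth by metis+
  hence du: "d1^2+d2^2+d3^2=1" using D' by simp
  define r where "r = sqrt (2::real)"
  have r: "r^2 = 2" "r > 0" unfolding r_def by auto
  have T1: "sqrt x \<le> (x + 2)/(2 * r)" if "x \<ge> 0" for x
    using tangent[OF that r(2)] r(1) by simp
  have T2: "sqrt x \<le> (x + 4)/4" if "x \<ge> 0" for x
    using tangent[OF that, of 2] by (simp add: power2_eq_square)
  let ?AB = "(0-b1)^2 + (-1-b2)^2 + (0-0)^2"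
  let ?BC = "(b1-c1)^2 + (b2-c2)^2 + (0-0)^2"
  let ?CA = "(c1-0)^2 + (c2- -1)^2 + (0-0)^2"
  let ?DA = "(d1-0)^2 + (d2- -1)^2 + (d3-0)^2"
  let ?DB = "(d1-b1)^2 + (d2-b2)^2 + (d3-0)^2"
  let ?DC = "(d1-c1)^2 + (d2-c2)^2 + (d3-0)^2"
  have dists: "dist A_pt B = sqrt ?AB" "dist B C = sqrt ?BC" "dist C A_pt = sqrt ?CA"
    "dist D A_pt = sqrt ?DA" "dist D B = sqrt ?DB" "dist D C = sqrt ?DC"
    unfolding A_pt_def B(1) C(1) D(1) dist_pt by simp_all
  have "dist A_pt B + dist B C + dist C A_pt + dist D A_pt + dist D B + dist D C
     \<le> (?AB + ?CA + ?DB + ?DC + 8)/(2 * r) + (?BC + ?DA + 8)/4"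
    unfolding dists using T1[of ?AB] T1[of ?CA] T1[of ?DB] T1[of ?DC] T2[of ?BC] T2[of ?DA]
    by (simp add: add_divide_distrib)
  also have "\<dots> = r * (?AB + ?CA + ?DB + ?DC + 8)/4 + (?BC + ?DA + 8)/4"
  proof -
    have q: "X/(2 * r) = r * X/4" for X :: real
    proof -
      have rr: "r * r = 2" using r by (simp add: power2_eq_square)
      have "r * X/4 = (r * r) * X/(4 * r)" using r by simp
      also have "\<dots> = X/(2 * r)" unfolding rr by simp
      finally show ?thesis by simp
    qed
    show ?thesis by (simp only: q)
  qed
  also have "\<dots> \<le> 4 + 4 * r"
  proof -
    have k: "(b1 + c1)^2/2 + (b2+c2)^2/2 + (1-d2) + r * d1 * (b1+c1) - r * (1-d2) * (b2+c2) \<ge> 0"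
      apply (rule key[OF bu cu du _ _ _ _ _ _ _ r])
      using B C D unfolding \<delta>1_def \<delta>2_def by auto
    have s1: "?AB + ?CA + ?DB + ?DC + 8 = 16 - 2 * (-b2-c2 + d1 * (b1+c1) + d2 * (b2+c2))"
      using bu cu du by (simp add: power2_eq_square algebra_simps)
    have s2: "?BC + ?DA + 8 = 12 - 2 * (b1 * c1+b2 * c2 - d2)"
      using bu cu du by (simp add: power2_eq_square algebra_simps)
    have s3': "(b1 + c1)^2/2 + (b2+c2)^2/2 = (b1^2+b2^2)/2 + (c1^2+c2^2)/2 + b1 * c1+b2 * c2"
      by (simp add: power2_eq_square field_simps)
    have s3: "(b1 + c1)^2/2 + (b2+c2)^2/2 = 1 + b1 * c1+b2 * c2"
      unfolding s3' bu cu by simp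
    show ?thesis unfolding s1 s2 by (rule final_arith[OF k s3])
  qed
  finally show ?thesis unfolding r_def .
qed

end
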